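(* Let $\tau\in\mathcal T_1$ and $t>0$ with $2/t$ not a positive integer. If $\psi$ is an Ad-invariant distribution on $SU(2)$ such that $z\mapsto|C^\tau_t(\psi)(d(z))|^2|\sigma(z)|^2\exp(-\frac{4\pi}{t\tau_2}(\mathrm{Im}\,z)^2)$ is invariant under $z\mapsto z+\tau$, then $\psi=0$.
   Context: $d(z)=\mathrm{diag}(e^{2\pi iz},e^{-2\pi iz})$, $\sigma(z)=e^{2\pi iz}-e^{-2\pi iz}$. $\chi_m$ ($m\ge0$) the character of the $(m+1)$-dimensional irreducible representation of $SU(2)$, $c_m=((m+1)^2-1)/2$. Ad-invariant distribution: formal series $\psi=\sum_{m\ge0}a_m\chi_m$ with $|a_m|(1+m^2)^{-N}\to0$ for some $N$. $\mathcal T_1=\{\mathrm{Im}\,\tau>0\}$, $\tau_2=\mathrm{Im}\,\tau$, $C^\tau_t(\psi)(g)=\sum_ma_me^{i\pi\tau tc_m}\chi_m(g)$, $g\in SL(2,\mathbb C)$. *)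

theory Defs
  imports "HOL-Analysis.Analysis"
begin

definition dmat :: "complex \<Rightarrow> complex^2^2" where
  "dmat z = (\<chi> i j. if i = j then (if i = 1 then exp (2*pi*\<i>*z) else exp (-(2*pi*\<i>*z))) else 0)"

definition sigma :: "complex \<Rightarrow> complex" where
  "sigma z = exp (2*pi*\<i>*z) - exp (-(2*pi*\<i>*z))"

definition mtrace :: "complex^2^2 \<Rightarrow> complex" where
  "mtrace A = (\<Sum>i\<in>UNIV. A $ i $ i)"

text \<open>Characters of the irreducible (m+1)-dimensional representations of SL(2,C)
  (holomorphic extensions of the SU(2) characters), via the Clebsch--Gordan
  recursion chi_1 * chi_m = chi_(m+1) + chi_(m-1), chi_1 = trace.\<close>
fun chi :: "nat \<Rightarrow> complex^2^2 \<Rightarrow> complex" where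
  "chi 0 g = 1"
| "chi (Suc 0) g = mtrace g"
| "chi (Suc (Suc m)) g = mtrace g * chi (Suc m) g - chi m g"

definition cm :: "nat \<Rightarrow> real" where
  "cm m = ((real m + 1)^2 - 1) / 2"

text \<open>Ad-invariant distribution psi = sum a_m chi_m, given by its coefficient sequence.\<close>
definition ad_inv_distribution :: "(nat \<Rightarrow> complex) \<Rightarrow> bool" where
  "ad_inv_distribution a \<longleftrightarrow>
     (\<exists>N::nat. ((\<lambda>m. norm (a m) * (1 + (real m)^2) powi (- int N)) \<longlonglongrightarrow> 0))"

definition Ctau :: "complex \<Rightarrow> real \<Rightarrow> (nat \<Rightarrow> complex) \<Rightarrow> complex^2^2 \<Rightarrow> complex" where
  "Ctau \<tau> t a g = (\<Sum>m. a m * exp (\<i> * pi * \<tau> * t * cm m) * chi m g)"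

end

theory Submission
  imports Defs "HOL-Complex_Analysis.Complex_Analysis"
begin

lemma gauss_summable_pos:
  fixes \<alpha> R :: real
  assumes "\<alpha> > 0" "R > 0"
  shows "summable (\<lambda>n::nat. (1 + real n ^ 2) ^ N * R ^ n * exp (- \<alpha> * real n ^ 2))"
proof (rule summable_ratio_test[where c = "1/2" and N = "nat \<lceil>2 * 4^N * R / \<alpha>\<rceil>"])
  fix n :: nat assume hn: "nat \<lceil>2 * 4^N * R / \<alpha>\<rceil> \<le> n"
  have n1: "2 * 4^N * R / \<alpha> \<le> real n" using hn by linarith
  have n2: "2 * 4^N * R \<le> \<alpha> * real n" using n1 assms by (simp add: field_simps)
  have "\<alpha> * real n \<le> \<alpha> * (2 * real n + 1)" using assms by simp
  also have "\<dots> \<le> exp (\<alpha> * (2 * real n + 1))"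
    by (meson exp_ge_add_one_self_aux add_increasing linorder_not_le less_le_not_le order.trans zero_le_one exp_ge_zero)
  finally have e1: "2 * 4^N * R \<le> exp (\<alpha> * (2 * real n + 1))" using n2 by linarith
  have q4: "1 + real (Suc n) ^ 2 \<le> 4 * (1 + real n ^ 2)"
  proof -
    have e: "4 * (1 + real n ^ 2) - (1 + real (Suc n) ^ 2) = (real n - 1)^2 + 2 * real n ^ 2 + 1"
      by (simp add: power2_eq_square algebra_simps)
    have "0 \<le> (real n - 1)^2" "0 \<le> real n ^ 2" by simp_all
    then show ?thesis using e by linarith
  qed
  have qpow: "(1 + real (Suc n) ^ 2) ^ N \<le> 4 ^ N * (1 + real n ^ 2) ^ N"
    by (metis power_mono q4 power_mult_distrib add_nonneg_nonneg zero_le_one zero_le_power2)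
  have ex: "exp (- \<alpha> * real (Suc n) ^ 2) = exp (- \<alpha> * real n ^ 2) * exp (- (\<alpha> * (2 * real n + 1)))"
    by (simp add: exp_add[symmetric] power2_eq_square algebra_simps)
  have e2: "4 ^ N * R * exp (- (\<alpha> * (2 * real n + 1))) \<le> 1/2"
  proof -
    have "4 ^ N * R * exp (- (\<alpha> * (2 * real n + 1))) = (4 ^ N * R) / exp (\<alpha> * (2 * real n + 1))"
      by (simp add: exp_minus divide_inverse)
    also have "\<dots> \<le> 1/2" using e1 by (subst pos_divide_le_eq) auto
    finally show ?thesis .
  qed
  define A where "A = (1 + real n ^ 2) ^ N * R ^ n * exp (- \<alpha> * real n ^ 2)"
  have A0: "A \<ge> 0" unfolding A_def using assms by simp
  have "(1 + real (Suc n) ^ 2) ^ N * R ^ Suc n * exp (- \<alpha> * real (Suc n) ^ 2)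
      = (1 + real (Suc n) ^ 2) ^ N * (R ^ n * exp (- \<alpha> * real n ^ 2)) * (R * exp (- (\<alpha> * (2 * real n + 1))))"
    by (subst ex) (simp add: mult_ac)
  also have "\<dots> \<le> 4 ^ N * (1 + real n ^ 2) ^ N * (R ^ n * exp (- \<alpha> * real n ^ 2)) * (R * exp (- (\<alpha> * (2 * real n + 1))))"
    using qpow assms by (intro mult_right_mono) auto
  also have "\<dots> = A * (4 ^ N * R * exp (- (\<alpha> * (2 * real n + 1))))" unfolding A_def by simp
  also have "\<dots> \<le> A * (1/2)" using e2 A0 by (intro mult_left_mono) auto
  finally show "norm ((1 + real (Suc n) ^ 2) ^ N * R ^ Suc n * exp (- \<alpha> * real (Suc n) ^ 2))
     \<le> 1/2 * norm ((1 + real n ^ 2) ^ N * R ^ n * exp (- \<alpha> * real n ^ 2))"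
    using assms unfolding A_def by simp
qed simp

lemma gauss_summable:
  fixes \<alpha> R :: real
  assumes "\<alpha> > 0" "R \<ge> 0"
  shows "summable (\<lambda>n::nat. (1 + real n ^ 2) ^ N * R ^ n * exp (- \<alpha> * real n ^ 2))"
proof (rule summable_comparison_test[OF _ gauss_summable_pos[OF assms(1), of "R+1" N]])
  show "\<exists>N0. \<forall>n\<ge>N0. norm ((1 + real n ^ 2) ^ N * R ^ n * exp (- \<alpha> * real n ^ 2))
          \<le> (1 + real n ^ 2) ^ N * (R+1) ^ n * exp (- \<alpha> * real n ^ 2)"
    using assms by (auto intro!: mult_right_mono mult_left_mono power_mono)
qed (use assms in auto)

lemma powser_summable_gauss:
  fixes b :: "nat \<Rightarrow> complex"
  assumes "\<alpha> > 0" and bb: "\<And>n. norm (b n) \<le> B * (1 + real n ^ 2) ^ N * exp (- \<alpha> * real n ^ 2)"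
  shows "summable (\<lambda>n. b n * w ^ n)"
proof (rule summable_comparison_test[where g = "\<lambda>n. B * ((1 + real n ^ 2) ^ N * norm w ^ n * exp (- \<alpha> * real n ^ 2))"])
  show "summable (\<lambda>n. B * ((1 + real n ^ 2) ^ N * norm w ^ n * exp (- \<alpha> * real n ^ 2)))"
    by (rule summable_mult[OF gauss_summable[OF assms(1)]]) simp
  show "\<exists>N0. \<forall>n\<ge>N0. norm (b n * w ^ n) \<le> B * ((1 + real n ^ 2) ^ N * norm w ^ n * exp (- \<alpha> * real n ^ 2))"
  proof (intro exI allI impI)
    fix n :: nat
    have "norm (b n * w ^ n) = norm (b n) * norm w ^ n" by (simp add: norm_mult norm_power)
    also have "\<dots> \<le> B * (1 + real n ^ 2) ^ N * exp (- \<alpha> * real n ^ 2) * norm w ^ n"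
      by (rule mult_right_mono[OF bb]) simp
    finally show "norm (b n * w ^ n) \<le> B * ((1 + real n ^ 2) ^ N * norm w ^ n * exp (- \<alpha> * real n ^ 2))"
      by (simp add: mult_ac)
  qed
qed

lemma chi_sigma:
  shows "mtrace g = q + p \<Longrightarrow> q * p = 1 \<Longrightarrow> (q - p) * chi m g = q ^ Suc m - p ^ Suc m"
proof (induction m g rule: chi.induct)
  case (1 g) then show ?case by simp
next
  case (2 g) then show ?case by (simp add: algebra_simps power2_eq_square)
next
  case (3 m g)
  have "(q - p) * chi (Suc (Suc m)) g = (q + p) * ((q - p) * chi (Suc m) g) - (q - p) * chi m g"
    using 3 by (simp add: algebra_simps)
  also have "\<dots> = (q + p) * (q ^ Suc (Suc m) - p ^ Suc (Suc m)) - (q ^ Suc m - p ^ Suc m)"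
    using 3 by simp
  also have "\<dots> = q ^ Suc (Suc (Suc m)) - p ^ Suc (Suc (Suc m)) + (q * p) * (q ^ Suc m - p ^ Suc m) - (q ^ Suc m - p ^ Suc m)"
    by (simp add: algebra_simps)
  also have "\<dots> = q ^ Suc (Suc (Suc m)) - p ^ Suc (Suc (Suc m))" using 3 by simp
  finally show ?case .
qed

lemma mtrace_dmat: "mtrace (dmat z) = exp (2*pi*\<i>*z) + exp (-(2*pi*\<i>*z))"
  by (simp add: mtrace_def dmat_def sum_2)

definition bco :: "complex \<Rightarrow> real \<Rightarrow> (nat \<Rightarrow> complex) \<Rightarrow> nat \<Rightarrow> complex" where
  "bco \<tau> t a n = (if n = 0 then 0 else a (n-1) * exp (\<i> * pi * \<tau> * t * cm (n-1)))"

lemma ad_inv_bound: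
  assumes "ad_inv_distribution a"
  obtains K N where "K > 0" "\<And>m. norm (a m) \<le> K * (1 + real m ^ 2) ^ N"
proof -
  obtain N :: nat where lim: "(\<lambda>m. norm (a m) * (1 + (real m)^2) powi (- int N)) \<longlonglongrightarrow> 0"
    using assms unfolding ad_inv_distribution_def by blast
  then have "Bseq (\<lambda>m. norm (a m) * (1 + (real m)^2) powi (- int N))"
    by (rule convergent_imp_Bseq[OF convergentI])
  then obtain K where K: "K > 0" "\<And>m. norm (norm (a m) * (1 + (real m)^2) powi (- int N)) \<le> K"
    unfolding Bseq_def by blast
  have "norm (a m) \<le> K * (1 + real m ^ 2) ^ N" for m
  proof -
    have pos: "(1 + real m ^ 2) ^ N > 0" by (simp add: add_pos_nonneg)
    have "norm (a m) * (1 + (real m)^2) powi (- int N) = norm (a m) / (1 + real m ^ 2) ^ N"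
      by (simp add: power_int_minus divide_inverse)
    then have "norm (a m) / (1 + real m ^ 2) ^ N \<le> K" using K(2)[of m] by simp
    then show ?thesis using pos by (simp add: pos_divide_le_eq)
  qed
  then show ?thesis using K(1) that by blast
qed

lemma norm_exp_ctau: "norm (exp (\<i> * pi * \<tau> * t * cm m)) = exp (- (pi * Im \<tau> * t * cm m))"
  by (simp add: norm_exp_eq_Re)

lemma bco_bound:
  assumes "Im \<tau> > 0" "t > 0" "ad_inv_distribution a"
  obtains B N where "\<And>n. norm (bco \<tau> t a n) \<le> B * (1 + real n ^ 2) ^ N * exp (- (pi * Im \<tau> * t / 2) * real n ^ 2)"
proof -
  obtain K N where K: "K > 0" "\<And>m. norm (a m) \<le> K * (1 + real m ^ 2) ^ N"
    using ad_inv_bound[OF assms(3)] by blast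
  define \<alpha> where "\<alpha> = pi * Im \<tau> * t / 2"
  have "norm (bco \<tau> t a n) \<le> (K * exp \<alpha>) * (1 + real n ^ 2) ^ N * exp (- \<alpha> * real n ^ 2)" for n
  proof (cases "n = 0")
    case True then show ?thesis using K by (simp add: bco_def)
  next
    case False
    then obtain m where n: "n = Suc m" by (cases n) auto
    have cmm: "pi * Im \<tau> * t * cm m = \<alpha> * real n ^ 2 - \<alpha>"
      unfolding cm_def \<alpha>_def n by (simp add: power2_eq_square algebra_simps)
    have "norm (bco \<tau> t a n) = norm (a m) * exp (- (pi * Im \<tau> * t * cm m))"
      by (simp add: bco_def n norm_mult norm_exp_ctau)
    also have "\<dots> = norm (a m) * (exp \<alpha> * exp (- \<alpha> * real n ^ 2))"
      by (simp add: cmm exp_add[symmetric])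
    also have "\<dots> \<le> K * (1 + real m ^ 2) ^ N * (exp \<alpha> * exp (- \<alpha> * real n ^ 2))"
      by (rule mult_right_mono[OF K(2)]) simp
    also have "\<dots> \<le> K * (1 + real n ^ 2) ^ N * (exp \<alpha> * exp (- \<alpha> * real n ^ 2))"
      using K(1) unfolding n by (intro mult_right_mono mult_left_mono power_mono) (auto intro!: power_mono)
    finally show ?thesis by (simp add: mult_ac)
  qed
  then show ?thesis using that unfolding \<alpha>_def by blast
qed

definition Pser :: "complex \<Rightarrow> real \<Rightarrow> (nat \<Rightarrow> complex) \<Rightarrow> complex \<Rightarrow> complex" where
  "Pser \<tau> t a w = (\<Sum>n. bco \<tau> t a n * w ^ n)"

definition Fth :: "complex \<Rightarrow> real \<Rightarrow> (nat \<Rightarrow> complex) \<Rightarrow> complex \<Rightarrow> complex" where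
  "Fth \<tau> t a z = Pser \<tau> t a (exp (2*pi*\<i>*z)) - Pser \<tau> t a (exp (-(2*pi*\<i>*z)))"

lemma pser_summable:
  assumes "Im \<tau> > 0" "t > 0" "ad_inv_distribution a"
  shows "summable (\<lambda>n. bco \<tau> t a n * w ^ n)"
proof -
  obtain B N where "\<And>n. norm (bco \<tau> t a n) \<le> B * (1 + real n ^ 2) ^ N * exp (- (pi * Im \<tau> * t / 2) * real n ^ 2)"
    using bco_bound[OF assms] by blast
  moreover have "pi * Im \<tau> * t / 2 > 0" using assms by simp
  ultimately show ?thesis using powser_summable_gauss by blast
qed

lemma pser_holo:
  assumes "Im \<tau> > 0" "t > 0" "ad_inv_distribution a"
  shows "Pser \<tau> t a holomorphic_on UNIV"
proof -
  have "(Pser \<tau> t a has_field_derivative (\<Sum>n. diffs (bco \<tau> t a) n * z^n)) (at z)" for z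
    unfolding Pser_def
    by (rule termdiffs_strong'[where K = "norm z + 1"]) (use pser_summable[OF assms] in auto)
  then show ?thesis
    unfolding holomorphic_on_def field_differentiable_def
    using has_field_derivative_at_within by blast
qed

lemma Fth_holo:
  assumes "Im \<tau> > 0" "t > 0" "ad_inv_distribution a"
  shows "Fth \<tau> t a holomorphic_on UNIV"
proof -
  have hP: "Pser \<tau> t a holomorphic_on UNIV" by (rule pser_holo[OF assms])
  have c: "(\<lambda>z. Pser \<tau> t a (exp (c*z))) holomorphic_on UNIV" for c
    using holomorphic_on_compose[of "\<lambda>z. exp(c*z)" UNIV "Pser \<tau> t a"] hP
    by (auto simp: o_def intro: holomorphic_on_subset holomorphic_intros)
  have "(\<lambda>z. Pser \<tau> t a (exp ((2*pi*\<i>)*z)) - Pser \<tau> t a (exp ((-(2*pi*\<i>))*z))) holomorphic_on UNIV"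
    by (intro holomorphic_intros c)
  then show ?thesis unfolding Fth_def by simp
qed

lemma F_eq:
  assumes "Im \<tau> > 0" "t > 0" "ad_inv_distribution a"
  shows "sigma z * Ctau \<tau> t a (dmat z) = Fth \<tau> t a z"
proof -
  define q where "q = exp (2*pi*\<i>*z)"
  define p where "p = exp (-(2*pi*\<i>*z))"
  have qp: "q * p = 1" unfolding q_def p_def by (metis exp_minus exp_not_eq_zero right_inverse)
  define x where "x m = a m * exp (\<i> * pi * \<tau> * t * cm m) * chi m (dmat z)" for m
  have sx: "(q - p) * x m = bco \<tau> t a (Suc m) * q ^ Suc m - bco \<tau> t a (Suc m) * p ^ Suc m" for m
  proof -
    have h: "(q - p) * chi m (dmat z) = q ^ Suc m - p ^ Suc m"
      using qp by (intro chi_sigma) (simp_all add: mtrace_dmat q_def p_def)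
    have "(q - p) * x m = a m * exp (\<i> * pi * \<tau> * t * cm m) * ((q - p) * chi m (dmat z))"
      unfolding x_def by (simp add: mult_ac)
    also have "\<dots> = a m * exp (\<i> * pi * \<tau> * t * cm m) * (q ^ Suc m - p ^ Suc m)" by (simp only: h)
    also have "\<dots> = bco \<tau> t a (Suc m) * q ^ Suc m - bco \<tau> t a (Suc m) * p ^ Suc m"
      by (simp add: bco_def algebra_simps)
    finally show ?thesis .
  qed
  have sq: "summable (\<lambda>m. bco \<tau> t a (Suc m) * q ^ Suc m)"
    using summable_Suc_iff[where f = "\<lambda>n. bco \<tau> t a n * q ^ n"] pser_summable[OF assms, of q] by simp
  have sp: "summable (\<lambda>m. bco \<tau> t a (Suc m) * p ^ Suc m)"
    using summable_Suc_iff[where f = "\<lambda>n. bco \<tau> t a n * p ^ n"] pser_summable[OF assms, of p] by simp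
  have Sq: "(\<Sum>m. bco \<tau> t a (Suc m) * q ^ Suc m) = Pser \<tau> t a q"
    unfolding Pser_def using suminf_split_head[OF pser_summable[OF assms, of q]] by (simp add: bco_def)
  have Sp: "(\<Sum>m. bco \<tau> t a (Suc m) * p ^ Suc m) = Pser \<tau> t a p"
    unfolding Pser_def using suminf_split_head[OF pser_summable[OF assms, of p]] by (simp add: bco_def)
  have sig: "sigma z = q - p" unfolding sigma_def q_def p_def by simp
  have Fq: "Fth \<tau> t a z = Pser \<tau> t a q - Pser \<tau> t a p" unfolding Fth_def q_def p_def by simp
  show ?thesis
  proof (cases "q - p = 0")
    case True
    then show ?thesis using sig Fq by simp
  next
    case False
    have s1: "summable (\<lambda>m. (q - p) * x m)" unfolding sx using summable_diff[OF sq sp] .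
    then have s2: "summable x" using summable_mult_D False by blast
    have "sigma z * Ctau \<tau> t a (dmat z) = (q - p) * suminf x"
      unfolding sig Ctau_def x_def by simp
    also have "\<dots> = (\<Sum>m. (q - p) * x m)" by (rule suminf_mult[OF s2, symmetric])
    also have "\<dots> = Pser \<tau> t a q - Pser \<tau> t a p" unfolding sx suminf_diff[OF sq sp, symmetric] Sq Sp ..
    finally show ?thesis using Fq by simp
  qed
qed

lemma const_mod:
  fixes f g :: "complex \<Rightarrow> complex"
  assumes hf: "f holomorphic_on UNIV" and hg: "g holomorphic_on UNIV"
    and nm: "\<And>z. norm (f z) = norm (g z)"
  shows "\<exists>c. \<forall>z. f z = c * g z"
proof (cases "\<forall>z. g z = 0")
  case True
  then have "\<forall>z. f z = 0 * g z" using nm by (metis mult_zero_left norm_eq_zero)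
  then show ?thesis by blast
next
  case False
  then obtain z0 where z0: "g z0 \<noteq> 0" by blast
  have cg: "continuous (at z0) g"
    using holomorphic_on_imp_differentiable_at[OF hg open_UNIV] field_differentiable_imp_continuous_at by blast
  then obtain r where r: "r > 0" "\<And>y. dist z0 y < r \<Longrightarrow> g y \<noteq> 0"
    using continuous_at_avoid[OF cg z0] by blast
  define h where "h w = f w / g w" for w
  have hh: "h holomorphic_on ball z0 r"
    unfolding h_def using r
    by (intro holomorphic_on_divide holomorphic_on_subset[OF hf] holomorphic_on_subset[OF hg]) auto
  have n1: "norm (h w) = 1" if "w \<in> ball z0 r" for w
    using r(2)[of w] that nm[of w] by (simp add: h_def norm_divide)
  have "h constant_on ball z0 r"
    by (rule maximum_modulus_principle[OF hh open_ball connected_ball open_ball subset_refl, of z0])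
       (use r n1 in auto)
  then obtain c where c: "\<And>w. w \<in> ball z0 r \<Longrightarrow> h w = c" unfolding constant_on_def by blast
  have "f z = c * g z" for z
  proof (rule analytic_continuation_open[of "ball z0 r" UNIV f "\<lambda>z. c * g z"])
    show "ball z0 r \<noteq> {}" using r by simp
    show "(\<lambda>z. c * g z) holomorphic_on UNIV" using hg by (intro holomorphic_intros)
    show "f w = c * g w" if "w \<in> ball z0 r" for w
      using c[OF that] r(2)[of w] that by (simp add: h_def field_simps)
  qed (use hf in auto)
  then show ?thesis by blast
qed

lemma exp_period1: "exp (2*pi*\<i>*(z+1)) = exp (2*pi*\<i>*z)"
proof -
  have "exp (2*pi*\<i>*(z+1)) = exp (2*pi*\<i>*z) * exp (2*pi*\<i>)"
    by (simp add: distrib_left exp_add)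
  then show ?thesis by simp
qed

lemma exp_period2: "exp (-(2*pi*\<i>*(z+1))) = exp (-(2*pi*\<i>*z))"
  by (metis exp_minus exp_period1)

lemma Fth_period: "Fth \<tau> t a (z + 1) = Fth \<tau> t a z"
  unfolding Fth_def exp_period1 exp_period2 ..

theorem lemma5p14:
  fixes \<tau> :: complex and t :: real and a :: "nat \<Rightarrow> complex"
  assumes "Im \<tau> > 0" and "t > 0"
    and "\<not> (\<exists>n::nat. n > 0 \<and> 2 / t = real n)"
    and "ad_inv_distribution a"
    and "\<forall>z. (cmod (Ctau \<tau> t a (dmat (z + \<tau>))))^2 * (cmod (sigma (z + \<tau>)))^2
                 * exp (- (4*pi / (t * Im \<tau>)) * (Im (z + \<tau>))^2)
            = (cmod (Ctau \<tau> t a (dmat z)))^2 * (cmod (sigma z))^2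
                 * exp (- (4*pi / (t * Im \<tau>)) * (Im z)^2)"
  shows "\<forall>m. a m = 0"
proof -
  note A = assms(1,2,4)
  define F where "F = Fth \<tau> t a"
  define P where "P = Pser \<tau> t a"
  define k where "k = 4*pi / (t * Im \<tau>)"
  define G where "G z = F z * exp (complex_of_real (4*pi/t) * (-\<i>) * z + complex_of_real (2*pi*Im \<tau>/t))" for z
  have hF: "F holomorphic_on UNIV" unfolding F_def by (rule Fth_holo[OF A])
  have hP: "P holomorphic_on UNIV" unfolding P_def by (rule pser_holo[OF A])
  have H: "(cmod (F (z + \<tau>)))^2 * exp (- k * (Im z + Im \<tau>)^2) = (cmod (F z))^2 * exp (- k * (Im z)^2)" for z
  proof -
    have e: "(cmod (Ctau \<tau> t a (dmat w)))^2 * (cmod (sigma w))^2 = (cmod (F w))^2" for w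
      unfolding F_def F_eq[OF A, of w, symmetric] by (simp add: norm_mult power_mult_distrib)
    show ?thesis using assms(5)[rule_format, of z] unfolding e k_def by simp
  qed
  have N: "norm (F (z + \<tau>)) = norm (G z)" for z
  proof -
    define y where "y = Im z"
    define s where "s = Im \<tau>"
    have s0: "s > 0" using assms(1) s_def by simp
    have nG: "norm (G z) = norm (F z) * exp (4 * pi / t * y + 2 * pi * s / t)"
      unfolding G_def y_def s_def by (simp add: norm_mult)
    have ex: "- k * y^2 - (- k * (y + s)^2) = 2 * (4 * pi / t * y + 2 * pi * s / t)"
      unfolding k_def s_def[symmetric] using s0 assms(2) by (simp add: field_simps power2_eq_square)
    have "(norm (F (z + \<tau>)))^2 = (norm (F z))^2 * exp (- k * y^2) / exp (- k * (y + s)^2)"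
      using H[of z] unfolding y_def s_def by (simp add: field_simps)
    also have "\<dots> = (norm (F z))^2 * (exp (- k * y^2) / exp (- k * (y + s)^2))" by simp
    also have "\<dots> = (norm (F z))^2 * exp (2 * (4 * pi / t * y + 2 * pi * s / t))"
      by (simp only: exp_diff[symmetric] ex)
    also have "\<dots> = (norm (F z) * exp (4 * pi / t * y + 2 * pi * s / t))^2"
    proof -
      have eX: "exp (2 * (4 * pi / t * y + 2 * pi * s / t)) = exp (4 * pi / t * y + 2 * pi * s / t) * exp (4 * pi / t * y + 2 * pi * s / t)"
        by (simp only: mult_2 exp_add)
      show ?thesis unfolding eX power2_eq_square by (simp only: mult_ac)
    qed
    also have "\<dots> = (norm (G z))^2" by (simp only: nG)
    finally show ?thesis by (simp add: power2_eq_iff_nonneg)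
  qed
  have hG: "G holomorphic_on UNIV" unfolding G_def by (intro holomorphic_intros hF)
  have ht: "(\<lambda>z. z + \<tau>) holomorphic_on UNIV" by (intro holomorphic_intros)
  have "(F o (\<lambda>z. z + \<tau>)) holomorphic_on UNIV"
    by (rule holomorphic_on_compose[OF ht]) (rule holomorphic_on_subset[OF hF], simp)
  then have hFt: "(\<lambda>z. F (z + \<tau>)) holomorphic_on UNIV" by (simp add: o_def)
  obtain c where c: "\<And>z. F (z + \<tau>) = c * G z" using const_mod[OF hFt hG N] by blast
  define \<omega> where "\<omega> = exp (complex_of_real (4*pi/t) * (-\<i>))"
  have G1: "G (z + 1) = G z * \<omega>" for z
  proof -
    have "F (z + 1) = F z" unfolding F_def by (rule Fth_period)
    moreover have "complex_of_real (4*pi/t) * (-\<i>) * (z + 1) + complex_of_real (2*pi*Im \<tau>/t)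
      = (complex_of_real (4*pi/t) * (-\<i>) * z + complex_of_real (2*pi*Im \<tau>/t)) + complex_of_real (4*pi/t) * (-\<i>)"
      by (simp only: distrib_left add_ac mult_1_right)
    ultimately show ?thesis unfolding G_def \<omega>_def by (simp only: exp_add mult.assoc)
  qed
  have w1: "\<omega> \<noteq> 1"
  proof
    assume "\<omega> = 1"
    then obtain n :: int where n: "Im (complex_of_real (4*pi/t) * (-\<i>)) = of_int (2*n) * pi"
      unfolding \<omega>_def exp_eq_1 by blast
    then have "- (4*pi/t) = of_int (2*n) * pi" by simp
    then have "pi * (t * of_int n) = pi * (-2)" using assms(2) by (simp add: field_simps)
    then have "t * of_int n = -2" using pi_neq_zero mult_left_cancel by blast
    then have n2: "2 / t = - of_int n" using assms(2) by (simp add: field_simps)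
    have "2 / t > 0" using assms(2) by simp
    then have "n < 0" using n2 by simp
    then have "nat (-n) > 0 \<and> 2 / t = real (nat (-n))" using n2 by simp
    then show False using assms(3) by blast
  qed
  have F0: "F w = 0" for w
  proof -
    define z where "z = w - \<tau>"
    have "c * G z = F (z + \<tau>)" by (simp add: c)
    also have "\<dots> = F (z + \<tau> + 1)" unfolding F_def by (simp add: Fth_period)
    also have "\<dots> = F ((z + 1) + \<tau>)" by (simp add: add_ac)
    also have "\<dots> = c * G z * \<omega>" by (simp add: c G1)
    finally have "c * G z * (\<omega> - 1) = 0" by (simp add: algebra_simps)
    then have "c * G z = 0" using w1 by simp
    then show ?thesis using c[of z] unfolding z_def by simp
  qed
  have PP: "P q = P (inverse q)" if "q \<noteq> 0" for q
  proof -
    define z where "z = Ln q / (2*pi*\<i>)"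
    have zz: "2*pi*\<i>*z = Ln q" unfolding z_def by simp
    have "0 = F z" using F0 by simp
    also have "\<dots> = P q - P (inverse q)"
      unfolding F_def Fth_def P_def zz using that by (simp add: exp_minus)
    finally show ?thesis by simp
  qed
  have P0: "P 0 = 0" unfolding P_def Pser_def by (simp add: bco_def)
  have Pz: "P w = 0" for w
  proof -
    have cont: "continuous_on (cball 0 1) P"
      using holomorphic_on_imp_continuous_on[OF hP] continuous_on_subset by blast
    have bd: "bounded (P ` cball 0 1)"
      by (rule compact_imp_bounded[OF compact_continuous_image[OF cont compact_cball]])
    have "range P \<subseteq> P ` cball 0 1"
    proof
      fix v assume "v \<in> range P"
      then obtain u where u: "v = P u" by blast
      show "v \<in> P ` cball 0 1"
      proof (cases "norm u \<le> 1")
        case True then show ?thesis using u by auto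
      next
        case False
        then have "u \<noteq> 0" by auto
        moreover have "norm (inverse u) \<le> 1" using False by (simp add: norm_inverse inverse_le_1_iff)
        ultimately show ?thesis using u PP[of u] by auto
      qed
    qed
    then have "bounded (range P)" using bd bounded_subset by blast
    then have "P constant_on UNIV" using Liouville_theorem[OF hP] by blast
    then show ?thesis using P0 unfolding constant_on_def by auto
  qed
  have bz: "bco \<tau> t a m = 0" if m0: "m > 0" for m
  proof (rule ccontr)
    assume bm: "bco \<tau> t a m \<noteq> 0"
    have sm: "(\<lambda>n. bco \<tau> t a n * (x - 0) ^ n) sums (P x)" if "norm (x - 0) < 1" for x
      unfolding P_def Pser_def using summable_sums[OF pser_summable[OF A, of x]] by simp
    obtain s where s: "0 < s" "\<And>z. z \<in> cball 0 s - {0} \<Longrightarrow> P z \<noteq> 0"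
      using powser_0_nonzero[where r=1 and a="bco \<tau> t a" and \<xi>=0 and f=P and m=m, OF zero_less_one sm P0 bm m0] by blast
    have "complex_of_real s \<in> cball 0 s - {0}" using s(1) by auto
    then show False using s(2) Pz by blast
  qed
  show ?thesis
  proof
    fix m
    have "bco \<tau> t a (Suc m) = 0" using bz by simp
    then show "a m = 0" by (simp add: bco_def)
  qed
qed

end
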